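(* Let $G$ be an undirected graph, $P$ a set of terminal pairs of $G$, and $x\in V(G)$ such that $G-\{x\}$ is a forest. Assume that each vertex of $G$ occurs in at most one terminal pair, every terminal has degree $1$ in $G$, the two terminals of a pair are not adjacent, every neighbor of $x$ is a leaf of $G-\{x\}$, and $x$ is not a terminal. Then there is a set of pairwise edge-disjoint paths in $G$ connecting every terminal pair in $P$ if and only if every tree $T$ (connected component) of $G-\{x\}$ is $\gamma_\emptyset$-connected.
   Context: For a tree $T$ of $G-\{x\}$, $T$ is $\gamma_\emptyset$-connected if there exists a set $S$ of pairwise edge-disjoint paths in $G[V(T)\cup\{x\}]$ such that for every terminal $a\in V(T)$ belonging to a terminal pair $\{a,b\}\in P$, the set $S$ either contains an $a$–$x$ path not containing $b$, or contains an $a$–$b$ path not containing $x$. *)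

theory Defs
  imports Main
begin

definition graph :: "'a set \<Rightarrow> 'a set set \<Rightarrow> bool" where
  "graph V E \<longleftrightarrow> finite V \<and> (\<forall>e\<in>E. \<exists>u v. e = {u, v} \<and> u \<noteq> v \<and> u \<in> V \<and> v \<in> V)"

definition is_path :: "'a set set \<Rightarrow> 'a list \<Rightarrow> bool" where
  "is_path E p \<longleftrightarrow> p \<noteq> [] \<and> distinct p \<and> (\<forall>i. Suc i < length p \<longrightarrow> {p ! i, p ! Suc i} \<in> E)"

definition path_edges :: "'a list \<Rightarrow> 'a set set" where
  "path_edges p = {{p ! i, p ! Suc i} | i. Suc i < length p}"

definition path_betw :: "'a set set \<Rightarrow> 'a list \<Rightarrow> 'a \<Rightarrow> 'a \<Rightarrow> bool" where
  "path_betw E p u v \<longleftrightarrow> is_path E p \<and>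
     ((hd p = u \<and> last p = v) \<or> (hd p = v \<and> last p = u))"

definition edge_disjoint :: "'a list set \<Rightarrow> bool" where
  "edge_disjoint S \<longleftrightarrow> (\<forall>p\<in>S. \<forall>q\<in>S. p \<noteq> q \<longrightarrow> path_edges p \<inter> path_edges q = {})"

definition is_cycle :: "'a set set \<Rightarrow> 'a list \<Rightarrow> bool" where
  "is_cycle E c \<longleftrightarrow> length c \<ge> 3 \<and> is_path E c \<and> {last c, hd c} \<in> E"

definition forest :: "'a set \<Rightarrow> 'a set set \<Rightarrow> bool" where
  "forest V E \<longleftrightarrow> graph V E \<and> \<not> (\<exists>c. is_cycle E c)"

definition degree :: "'a set set \<Rightarrow> 'a \<Rightarrow> nat" where
  "degree E v = card {e \<in> E. v \<in> e}"

definition del_verts :: "'a set set \<Rightarrow> 'a \<Rightarrow> 'a set set" where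
  "del_verts E x = {e \<in> E. x \<notin> e}"

definition induced_edges :: "'a set set \<Rightarrow> 'a set \<Rightarrow> 'a set set" where
  "induced_edges E W = {e \<in> E. e \<subseteq> W}"

definition reachable :: "'a set set \<Rightarrow> 'a \<Rightarrow> 'a \<Rightarrow> bool" where
  "reachable E u v \<longleftrightarrow> (\<exists>p. path_betw E p u v)"

definition components :: "'a set \<Rightarrow> 'a set set \<Rightarrow> 'a set set" where
  "components V E = {{w \<in> V. reachable E v w} | v. v \<in> V}"

definition terminal_pairs :: "'a set \<Rightarrow> 'a set set \<Rightarrow> bool" where
  "terminal_pairs V P \<longleftrightarrow> (\<forall>q\<in>P. \<exists>a b. q = {a, b} \<and> a \<noteq> b \<and> a \<in> V \<and> b \<in> V)"

definition gamma_empty_connected ::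
  "'a set set \<Rightarrow> 'a set set \<Rightarrow> 'a \<Rightarrow> 'a set \<Rightarrow> bool" where
  "gamma_empty_connected E P x C \<longleftrightarrow>
     (\<exists>S. (\<forall>p\<in>S. is_path (induced_edges E (C \<union> {x})) p) \<and> edge_disjoint S \<and>
        (\<forall>a\<in>C. \<forall>b. {a, b} \<in> P \<longrightarrow>
            (\<exists>p\<in>S. path_betw (induced_edges E (C \<union> {x})) p a x \<and> b \<notin> set p) \<or>
            (\<exists>p\<in>S. path_betw (induced_edges E (C \<union> {x})) p a b \<and> x \<notin> set p)))"

end

theory Submission
  imports Defs
begin


fun walk :: "'a set set \<Rightarrow> 'a list \<Rightarrow> bool" where
  "walk E [] = False"
| "walk E [v] = True"
| "walk E (u # v # vs) = ({u,v} \<in> E \<and> walk E (v # vs))"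

fun wedges :: "'a list \<Rightarrow> 'a set set" where
  "wedges [] = {}"
| "wedges [v] = {}"
| "wedges (u # v # vs) = insert {u,v} (wedges (v#vs))"

lemma walk_nth: "walk E l \<longleftrightarrow> l \<noteq> [] \<and> (\<forall>i. Suc i < length l \<longrightarrow> {l!i, l!Suc i} \<in> E)"
proof (induction E l rule: walk.induct)
  case (3 E u v vs)
  have "(\<forall>i. Suc i < length (u#v#vs) \<longrightarrow> {(u#v#vs)!i, (u#v#vs)!Suc i} \<in> E) \<longleftrightarrow>
        {u,v} \<in> E \<and> (\<forall>j. Suc j < length (v#vs) \<longrightarrow> {(v#vs)!j, (v#vs)!Suc j} \<in> E)"
    (is "?L \<longleftrightarrow> ?R")
  proof
    assume L: ?L
    show ?R
    proof (intro conjI allI impI)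
      show "{u,v} \<in> E" using L[rule_format, of 0] by simp
      fix j assume "Suc j < length (v#vs)"
      then show "{(v#vs)!j, (v#vs)!Suc j} \<in> E" using L[rule_format, of "Suc j"] by simp
    qed
  next
    assume R: ?R
    show ?L
    proof (intro allI impI)
      fix i assume i: "Suc i < length (u#v#vs)"
      show "{(u#v#vs)!i, (u#v#vs)!Suc i} \<in> E"
      proof (cases i)
        case 0 then show ?thesis using R by simp
      next
        case (Suc j) then show ?thesis using R i by simp
      qed
    qed
  qed
  then show ?case using 3 by simp
qed auto

lemma path_edges_Nil: "path_edges [] = {}" by (simp add: path_edges_def)
lemma path_edges_single: "path_edges [v] = {}" by (simp add: path_edges_def)
lemma path_edges_Cons: "path_edges (u#v#vs) = insert {u,v} (path_edges (v#vs))"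
proof (intro equalityI subsetI)
  fix e assume "e \<in> path_edges (u#v#vs)"
  then obtain i where e: "e = {(u#v#vs)!i, (u#v#vs)!Suc i}" "Suc i < length (u#v#vs)"
    by (auto simp: path_edges_def)
  show "e \<in> insert {u,v} (path_edges (v#vs))"
  proof (cases i)
    case 0 then show ?thesis using e by simp
  next
    case (Suc j) then show ?thesis using e by (auto simp: path_edges_def)
  qed
next
  fix e assume "e \<in> insert {u,v} (path_edges (v#vs))"
  then show "e \<in> path_edges (u#v#vs)"
  proof
    assume "e = {u,v}" then show ?thesis unfolding path_edges_def
      by (rule_tac CollectI, rule_tac x=0 in exI) simp
  next
    assume "e \<in> path_edges (v#vs)"
    then obtain j where "e = {(v#vs)!j, (v#vs)!Suc j}" "Suc j < length (v#vs)"
      by (auto simp: path_edges_def)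
    then show ?thesis unfolding path_edges_def
      by (rule_tac CollectI, rule_tac x="Suc j" in exI) simp
  qed
qed

lemma path_edges_wedges: "path_edges l = wedges l"
  by (induction l rule: wedges.induct) (simp_all add: path_edges_Nil path_edges_single path_edges_Cons)

lemma is_path_walk: "is_path E p \<longleftrightarrow> walk E p \<and> distinct p"
  by (auto simp: is_path_def walk_nth)

lemma walk_append: "walk E (xs @ y # ys) \<longleftrightarrow> walk E (xs @ [y]) \<and> walk E (y # ys)"
proof (induction xs)
  case (Cons a xs) then show ?case by (cases xs) auto
qed simp

lemma wedges_append: "wedges (xs @ y # ys) = wedges (xs @ [y]) \<union> wedges (y # ys)"
proof (induction xs)
  case (Cons a xs) then show ?case by (cases xs) auto
qed simp

lemma walk_rev: "walk E (rev l) = walk E l"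
proof (induction l)
  case (Cons u l)
  show ?case
  proof (cases l)
    case (Cons v l')
    have "walk E (rev (u#l)) = walk E (rev l' @ v # [u])" using Cons by simp
    also have "\<dots> = (walk E (rev l' @ [v]) \<and> walk E [v,u])" by (rule walk_append)
    also have "\<dots> = (walk E (v#l') \<and> {v,u} \<in> E)" using Cons.IH Cons by simp
    also have "\<dots> = walk E (u#l)" using Cons by (simp add: insert_commute conj_commute)
    finally show ?thesis .
  qed simp
qed simp

lemma wedges_rev: "wedges (rev l) = wedges l"
proof (induction l)
  case (Cons u l)
  show ?case
  proof (cases l)
    case (Cons v l')
    have "wedges (rev (u#l)) = wedges (rev l' @ v # [u])" using Cons by simp
    also have "\<dots> = wedges (rev l' @ [v]) \<union> wedges [v,u]" by (rule wedges_append)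
    also have "\<dots> = wedges (v#l') \<union> {{v,u}}" using Cons.IH Cons by simp
    also have "\<dots> = wedges (u#l)" using Cons by (auto simp: insert_commute)
    finally show ?thesis .
  qed simp
qed simp

lemma walk_prefix: "walk E (xs @ ys) \<Longrightarrow> xs \<noteq> [] \<Longrightarrow> walk E xs"
proof (induction xs)
  case (Cons a xs) then show ?case by (cases xs) auto
qed simp

lemma walk_concat:
  assumes "walk E xs" "walk E ys" "last xs = hd ys"
  shows "walk E (xs @ tl ys) \<and> wedges (xs @ tl ys) = wedges xs \<union> wedges ys"
proof -
  obtain y ys' where ys: "ys = y # ys'" using assms(2) by (cases ys) auto
  have "xs \<noteq> []" using assms(1) by auto
  have xs: "xs = butlast xs @ [y]" using append_butlast_last_id[OF \<open>xs \<noteq> []\<close>] assms(3) ys by simp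
  have "xs @ tl ys = butlast xs @ y # ys'" using xs ys by (metis append.assoc append_Cons append_Nil list.sel(3))
  moreover have "walk E (butlast xs @ y # ys')" using assms ys walk_append[of E "butlast xs" y ys'] xs by simp
  moreover have "wedges (butlast xs @ y # ys') = wedges xs \<union> wedges ys" using ys wedges_append[of "butlast xs" y ys'] xs by simp
  ultimately show ?thesis by simp
qed

lemma walk_to_path: "walk E w \<Longrightarrow> \<exists>p. walk E p \<and> distinct p \<and> hd p = hd w \<and> last p = last w
   \<and> set p \<subseteq> set w \<and> wedges p \<subseteq> wedges w"
proof (induction E w rule: walk.induct)
  case (2 E v) then show ?case by (rule_tac x="[v]" in exI) simp
next
  case (3 E u v vs)
  then obtain p' where p': "walk E p'" "distinct p'" "hd p' = v" "last p' = last (v#vs)"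
     "set p' \<subseteq> set (v#vs)" "wedges p' \<subseteq> wedges (v#vs)" by auto
  obtain p'' where p'': "p' = v # p''" using p' by (cases p') auto
  show ?case
  proof (cases "u \<in> set p'")
    case False
    show ?thesis using p' p'' False 3(2)
      by (rule_tac x="u#p'" in exI) auto
  next
    case True
    then obtain ys zs where s: "p' = ys @ u # zs" by (meson split_list)
    have "walk E (u#zs)" using p'(1) s walk_append by metis
    moreover have "distinct (u#zs)" using p'(2) s by simp
    moreover have "last (u#zs) = last (u#v#vs)" using p'(4) s by simp
    moreover have "set (u#zs) \<subseteq> set (u#v#vs)" using p'(5) s by auto
    moreover have "wedges (u#zs) \<subseteq> wedges (u#v#vs)" using p'(6) s wedges_append[of ys u zs] by auto
    ultimately show ?thesis by (rule_tac x="u#zs" in exI) simp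
  qed
qed simp

lemma path_betw_sym: "path_betw E p a b \<longleftrightarrow> path_betw E p b a"
  by (auto simp: path_betw_def)

lemma path_betw_ends: "path_betw E p a b \<Longrightarrow> {hd p, last p} = {a,b}"
  by (auto simp: path_betw_def)

lemma reachable_walk: "reachable E u v \<longleftrightarrow> (\<exists>w. walk E w \<and> hd w = u \<and> last w = v)"
proof
  assume "reachable E u v"
  then obtain p where p: "path_betw E p u v" by (auto simp: reachable_def)
  then have w: "walk E p" "p \<noteq> []" by (auto simp: path_betw_def is_path_walk is_path_def)
  show "\<exists>w. walk E w \<and> hd w = u \<and> last w = v"
  proof (cases "hd p = u \<and> last p = v")
    case True then show ?thesis using w by blast
  next
    case False then have "hd p = v \<and> last p = u" using p by (auto simp: path_betw_def)
    then show ?thesis using w walk_rev[of E p]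
      by (rule_tac x="rev p" in exI) (simp add: hd_rev last_rev)
  qed
next
  assume "\<exists>w. walk E w \<and> hd w = u \<and> last w = v"
  then obtain w where "walk E w" "hd w = u" "last w = v" by blast
  then obtain p where "walk E p" "distinct p" "hd p = u" "last p = v" using walk_to_path by metis
  then have "path_betw E p u v" unfolding path_betw_def is_path_walk by simp
  then show "reachable E u v" unfolding reachable_def by blast
qed

lemma reach_refl: "reachable E u u"
  unfolding reachable_walk by (rule_tac x="[u]" in exI) simp

lemma reach_sym: "reachable E u v \<Longrightarrow> reachable E v u"
proof -
  assume "reachable E u v"
  then obtain w where w: "walk E w" "hd w = u" "last w = v" unfolding reachable_walk by blast
  then have "walk E (rev w)" "hd (rev w) = v" "last (rev w) = u" by (simp_all add: walk_rev hd_rev last_rev)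
  then show ?thesis unfolding reachable_walk by blast
qed

lemma reach_trans: "reachable E u v \<Longrightarrow> reachable E v w \<Longrightarrow> reachable E u w"
proof -
  assume "reachable E u v" "reachable E v w"
  then obtain w1 w2 where a: "walk E w1" "hd w1 = u" "last w1 = v" "walk E w2" "hd w2 = v" "last w2 = w"
    unfolding reachable_walk by blast
  have "walk E (w1 @ tl w2)" using walk_concat[OF a(1) a(4)] a(3,5) by simp
  moreover have "w1 \<noteq> []" "w2 \<noteq> []" using a by auto
  moreover have "hd (w1 @ tl w2) = u" using a calculation by simp
  moreover have "last (w1 @ tl w2) = w"
  proof (cases "tl w2 = []")
    case True
    then have "w2 = [hd w2]" using \<open>w2 \<noteq> []\<close> by (cases w2) auto
    then show ?thesis using a True by (metis append_Nil2 last.simps)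
  next
    case False
    then have "last (tl w2) = last w2" using \<open>w2 \<noteq> []\<close> by (cases w2) auto
    then show ?thesis using False a by simp
  qed
  ultimately show ?thesis unfolding reachable_walk by blast
qed

lemma comp_of: "t \<in> W \<Longrightarrow> {w\<in>W. reachable D t w} \<in> components W D \<and> t \<in> {w\<in>W. reachable D t w}"
  by (auto simp: components_def reach_refl)

lemma comp_mem: "C \<in> components W D \<Longrightarrow> t \<in> C \<Longrightarrow> C = {w\<in>W. reachable D t w}"
proof -
  assume C: "C \<in> components W D" and t: "t \<in> C"
  then obtain v where v: "C = {w\<in>W. reachable D v w}" unfolding components_def by blast
  then have "reachable D v t" using t by blast
  then have "\<And>w. reachable D v w \<longleftrightarrow> reachable D t w" using reach_sym reach_trans by metis
  then show ?thesis using v by blast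
qed

lemma comp_disj: "C \<in> components W D \<Longrightarrow> C' \<in> components W D \<Longrightarrow> C \<noteq> C' \<Longrightarrow> C \<inter> C' = {}"
proof (rule ccontr)
  assume a: "C \<in> components W D" "C' \<in> components W D" "C \<noteq> C'" "C \<inter> C' \<noteq> {}"
  then obtain t where "t \<in> C" "t \<in> C'" by blast
  then show False using comp_mem[OF a(1)] comp_mem[OF a(2)] a(3) by metis
qed

lemma comp_sub: "C \<in> components W D \<Longrightarrow> C \<subseteq> W"
  unfolding components_def by blast

lemma walk_set: "walk E l \<Longrightarrow> set l \<subseteq> insert (hd l) (\<Union>E)"
  by (induction E l rule: walk.induct) auto

lemma walk_del: "walk E l \<Longrightarrow> x \<notin> set l \<Longrightarrow> walk (del_verts E x) l"
  by (induction E l rule: walk.induct) (auto simp: del_verts_def)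

lemma walk_ind: "walk E l \<Longrightarrow> set l \<subseteq> W \<Longrightarrow> walk (induced_edges E W) l"
  by (induction E l rule: walk.induct) (auto simp: induced_edges_def)

lemma walk_mono: "walk F l \<Longrightarrow> F \<subseteq> E \<Longrightarrow> walk E l"
  by (induction F l rule: walk.induct) auto

lemma walk_wedges: "walk F l \<Longrightarrow> wedges l \<subseteq> F"
  by (induction F l rule: walk.induct) auto

lemma wedges_elem: "e \<in> wedges l \<Longrightarrow> \<exists>u v. e = {u,v} \<and> u \<in> set l \<and> v \<in> set l \<and> (distinct l \<longrightarrow> u \<noteq> v)"
  by (induction l rule: wedges.induct) auto

lemma walk_in_comp:
  assumes "walk E l" "x \<notin> set l" "hd l \<in> C" "C \<in> components (V - {x}) (del_verts E x)" "graph V E"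
  shows "set l \<subseteq> C"
proof
  fix w assume w: "w \<in> set l"
  then obtain l1 l2 where s: "l = l1 @ w # l2" by (meson split_list)
  have "walk E (l1 @ [w])" using assms(1) s walk_append by metis
  moreover have "x \<notin> set (l1 @ [w])" using assms(2) s by auto
  ultimately have "walk (del_verts E x) (l1 @ [w])" using walk_del by metis
  moreover have "hd (l1 @ [w]) = hd l" using s by (cases l1) auto
  ultimately have r: "reachable (del_verts E x) (hd l) w" unfolding reachable_walk
    by (metis last_snoc)
  have "\<Union>E \<subseteq> V" using assms(5) by (auto simp: graph_def)
  moreover have "hd l \<in> V" using assms(3,4) comp_sub by blast
  ultimately have "w \<in> V" using walk_set[OF assms(1)] w by blast
  moreover have "w \<noteq> x" using w assms(2) by auto
  ultimately show "w \<in> C" using comp_mem[OF assms(4,3)] r by blast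
qed



definition orient :: "'a \<Rightarrow> 'a list \<Rightarrow> 'a list" where
  "orient t r = (if hd r = t then r else rev r)"

definition seg :: "'a \<Rightarrow> 'a \<Rightarrow> 'a list \<Rightarrow> 'a list" where
  "seg x t r = (if x \<in> set r then takeWhile (\<lambda>v. v \<noteq> x) (orient t r) @ [x] else r)"

lemma orient_gen: "set (orient t r) = set r \<and> wedges (orient t r) = wedges r \<and>
   walk E (orient t r) = walk E r \<and> distinct (orient t r) = distinct r"
  by (simp add: orient_def wedges_rev walk_rev)

lemma orient_facts:
  assumes "{hd r, last r} = {a,b}" "a \<noteq> b" "r \<noteq> []"
  shows "hd (orient a r) = a \<and> last (orient a r) = b \<and> orient b r = rev (orient a r)"
proof (cases "hd r = a")
  case True
  then have "last r = b" using assms by (auto simp: doubleton_eq_iff)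
  then show ?thesis using True assms by (simp add: orient_def)
next
  case False
  then have "hd r = b" "last r = a" using assms by (auto simp: doubleton_eq_iff)
  then show ?thesis using False assms by (simp add: orient_def hd_rev last_rev)
qed

lemma tw_split: "x \<notin> set ys \<Longrightarrow> takeWhile (\<lambda>v. v \<noteq> x) (ys @ x # zs) = ys"
  by (induction ys) auto

lemma seg_split:
  assumes "x \<in> set l" "distinct l"
  shows "\<exists>ys zs. l = ys @ x # zs \<and> x \<notin> set ys \<and> x \<notin> set zs \<and>
     takeWhile (\<lambda>v. v \<noteq> x) l = ys \<and> takeWhile (\<lambda>v. v \<noteq> x) (rev l) = rev zs"
proof -
  obtain ys zs where s: "l = ys @ x # zs" using assms(1) by (meson split_list)
  then have "x \<notin> set ys" "x \<notin> set zs" using assms(2) by auto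
  moreover have "takeWhile (\<lambda>v. v \<noteq> x) l = ys" using s calculation
    by (simp add: tw_split)
  moreover have "takeWhile (\<lambda>v. v \<noteq> x) (rev l) = rev zs" using s calculation
    by (simp add: tw_split)
  ultimately show ?thesis using s by blast
qed

lemma seg_wedges: "wedges (seg x t r) \<subseteq> wedges r"
proof (cases "x \<in> set r")
  case True
  then have "x \<in> set (orient t r)" using orient_gen by metis
  then obtain ys zs where s: "orient t r = ys @ x # zs" "x \<notin> set ys" by (meson split_list_first)
  then have "seg x t r = ys @ [x]" using True by (simp add: seg_def tw_split)
  moreover have "wedges (ys @ [x]) \<subseteq> wedges (orient t r)" using s wedges_append[of ys x zs] by simp
  ultimately show ?thesis using orient_gen by metis
qed (simp add: seg_def)

lemma disj_halves:
  assumes "distinct (ys @ x # zs)"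
  shows "wedges (ys @ [x]) \<inter> wedges (x # zs) = {}"
proof (rule ccontr)
  assume "wedges (ys @ [x]) \<inter> wedges (x # zs) \<noteq> {}"
  then obtain e where e: "e \<in> wedges (ys @ [x])" "e \<in> wedges (x # zs)" by blast
  obtain u1 v1 where 1: "e = {u1,v1}" "u1 \<in> set (ys @ [x])" "v1 \<in> set (ys @ [x])" "u1 \<noteq> v1"
    using wedges_elem[OF e(1)] assms by auto
  obtain u2 v2 where 2: "e = {u2,v2}" "u2 \<in> set (x # zs)" "v2 \<in> set (x # zs)"
    using wedges_elem[OF e(2)] by auto
  have d: "set ys \<inter> set (x # zs) = {}" using assms by auto
  have "u1 \<in> set ys \<or> v1 \<in> set ys" using 1 by auto
  moreover have "u1 \<in> set (x # zs)" "v1 \<in> set (x # zs)" using 1 2 by auto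
  ultimately show False using d by blast
qed



lemma ind_sub: "induced_edges E W \<subseteq> E" by (auto simp: induced_edges_def)

theorem mainTheorem11:
  fixes V :: "'a set" and E :: "'a set set" and P :: "'a set set" and x :: 'a
  assumes "graph V E"
    and "terminal_pairs V P"
    and "x \<in> V"
    and "forest (V - {x}) (del_verts E x)"
    and "\<forall>q1\<in>P. \<forall>q2\<in>P. q1 \<noteq> q2 \<longrightarrow> q1 \<inter> q2 = {}"
    and "\<forall>t\<in>\<Union>P. degree E t = 1"
    and "\<forall>a b. {a, b} \<in> P \<longrightarrow> {a, b} \<notin> E"
    and "\<forall>v. {x, v} \<in> E \<longrightarrow> degree (del_verts E x) v = 1"
    and "x \<notin> \<Union>P"
  shows "(\<exists>S. (\<forall>p\<in>S. is_path E p) \<and> edge_disjoint S \<and>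
            (\<forall>a b. {a, b} \<in> P \<longrightarrow> (\<exists>p\<in>S. path_betw E p a b)))
         \<longleftrightarrow> (\<forall>C\<in>components (V - {x}) (del_verts E x). gamma_empty_connected E P x C)"
proof
  have tp: "\<And>q t. q \<in> P \<Longrightarrow> t \<in> q \<Longrightarrow> \<exists>u. q = {t,u} \<and> t \<noteq> u \<and> t \<in> V \<and> u \<in> V \<and> t \<noteq> x \<and> u \<noteq> x"
  proof -
    fix q t assume q: "q \<in> P" "t \<in> q"
    then obtain a b where ab: "q = {a,b}" "a \<noteq> b" "a \<in> V" "b \<in> V"
      using assms(2) unfolding terminal_pairs_def by blast
    have "a \<noteq> x" "b \<noteq> x" using assms(9) q ab by auto
    then show "\<exists>u. q = {t,u} \<and> t \<noteq> u \<and> t \<in> V \<and> u \<in> V \<and> t \<noteq> x \<and> u \<noteq> x"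
      using ab q(2) by (metis empty_iff insert_commute insert_iff)
  qed
  have neq: "\<And>a b. {a,b} \<in> P \<Longrightarrow> a \<noteq> b \<and> a \<noteq> x \<and> b \<noteq> x \<and> a \<in> V \<and> b \<in> V"
  proof -
    fix a b assume ab: "{a,b} \<in> P"
    then obtain u where "{a,b} = {a,u}" "a \<noteq> u" "a \<in> V" "u \<in> V" "a \<noteq> x" "u \<noteq> x"
      using tp[OF ab] by blast
    then show "a \<noteq> b \<and> a \<noteq> x \<and> b \<noteq> x \<and> a \<in> V \<and> b \<in> V" by (auto simp: doubleton_eq_iff)
  qed
  {
    assume L: "\<exists>S. (\<forall>p\<in>S. is_path E p) \<and> edge_disjoint S \<and>
            (\<forall>a b. {a, b} \<in> P \<longrightarrow> (\<exists>p\<in>S. path_betw E p a b))"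
    then obtain S where S: "\<forall>p\<in>S. is_path E p" "edge_disjoint S"
       "\<forall>a b. {a, b} \<in> P \<longrightarrow> (\<exists>p\<in>S. path_betw E p a b)" by blast
    have hq: "\<forall>q\<in>P. \<exists>r\<in>S. \<forall>a b. q = {a,b} \<longrightarrow> path_betw E r a b"
    proof
      fix q assume q: "q \<in> P"
      then obtain a b where ab: "q = {a,b}"
        using assms(2) unfolding terminal_pairs_def by blast
      then obtain r where r: "r \<in> S" "path_betw E r a b" using S(3) q by blast
      show "\<exists>r\<in>S. \<forall>a b. q = {a,b} \<longrightarrow> path_betw E r a b"
        using r ab path_betw_sym by (metis doubleton_eq_iff)
    qed
    then obtain h where h: "\<forall>q\<in>P. h q \<in> S \<and> (\<forall>a b. q = {a,b} \<longrightarrow> path_betw E (h q) a b)"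
      by metis
    show "\<forall>C\<in>components (V - {x}) (del_verts E x). gamma_empty_connected E P x C"
    proof
      fix C assume C: "C \<in> components (V - {x}) (del_verts E x)"
      define SC where "SC = {seg x t (h q) | q t. q \<in> P \<and> t \<in> q \<and> t \<in> C}"
      have hp: "\<And>q t u. q \<in> P \<Longrightarrow> q = {t,u} \<Longrightarrow> t \<noteq> u \<Longrightarrow>
          walk E (h q) \<and> distinct (h q) \<and> h q \<noteq> [] \<and> {hd (h q), last (h q)} = {t,u}"
      proof -
        fix q t u assume a: "q \<in> P" "q = {t,u}" "t \<noteq> u"
        then have "path_betw E (h q) t u" using h by blast
        then show "walk E (h q) \<and> distinct (h q) \<and> h q \<noteq> [] \<and> {hd (h q), last (h q)} = {t,u}"
          using path_betw_ends by (auto simp: path_betw_def is_path_walk)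
      qed
      have key: "\<And>q t. q \<in> P \<Longrightarrow> t \<in> q \<Longrightarrow> t \<in> C \<Longrightarrow>
           is_path (induced_edges E (C \<union> {x})) (seg x t (h q))"
      proof -
        fix q t assume a: "q \<in> P" "t \<in> q" "t \<in> C"
        obtain u where u: "q = {t,u}" "t \<noteq> u" "t \<noteq> x" "u \<noteq> x" using tp[OF a(1,2)] by blast
        note r = hp[OF a(1) u(1,2)]
        define l where "l = orient t (h q)"
        have l: "hd l = t" "walk E l" "distinct l" "set l = set (h q)"
          using orient_facts[of "h q" t u] orient_gen[of t "h q" E] r u l_def by auto
        show "is_path (induced_edges E (C \<union> {x})) (seg x t (h q))"
        proof (cases "x \<in> set (h q)")
          case False
          then have "seg x t (h q) = h q" by (simp add: seg_def)
          moreover have "set l \<subseteq> C" using walk_in_comp[OF l(2) _ _ C assms(1)] l False a(3) by auto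
          ultimately show ?thesis using walk_ind[of E "h q" "C \<union> {x}"] r l(4)
            by (auto simp: is_path_walk)
        next
          case True
          then obtain ys zs where s: "l = ys @ x # zs" "x \<notin> set ys" "takeWhile (\<lambda>v. v \<noteq> x) l = ys"
            using seg_split[of x l] l by auto
          have sg: "seg x t (h q) = ys @ [x]" using True s l_def by (simp add: seg_def)
          have "walk E (ys @ [x])" using l(2) s walk_append by metis
          moreover have "ys \<noteq> []" using s l u by auto
          ultimately have wy: "walk E ys" "hd ys = t" using walk_prefix l s by auto
          have "set ys \<subseteq> C" using walk_in_comp[OF wy(1) s(2) _ C assms(1)] wy a(3) by auto
          then have "walk (induced_edges E (C \<union> {x})) (ys @ [x])"
            using walk_ind[OF \<open>walk E (ys @ [x])\<close>, of "C \<union> {x}"] by auto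
          moreover have "distinct (ys @ [x])" using l(3) s by auto
          ultimately show ?thesis using sg by (simp add: is_path_walk)
        qed
      qed
      have disj: "edge_disjoint SC"
        unfolding edge_disjoint_def path_edges_wedges
      proof (intro ballI impI)
        fix p p' assume pp: "p \<in> SC" "p' \<in> SC" "p \<noteq> p'"
        obtain q t where qt: "p = seg x t (h q)" "q \<in> P" "t \<in> q" using pp(1) SC_def by blast
        obtain q' t' where qt': "p' = seg x t' (h q')" "q' \<in> P" "t' \<in> q'" using pp(2) SC_def by blast
        show "wedges p \<inter> wedges p' = {}"
        proof (cases "q = q'")
          case False
          obtain u where u: "q = {t,u}" "t \<noteq> u" using tp[OF qt(2,3)] by blast
          obtain u' where u': "q' = {t',u'}" "t' \<noteq> u'" using tp[OF qt'(2,3)] by blast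
          have "h q \<noteq> h q'" using hp[OF qt(2) u] hp[OF qt'(2) u'] u u' False by metis
          then have "path_edges (h q) \<inter> path_edges (h q') = {}"
            using S(2) h qt(2) qt'(2) unfolding edge_disjoint_def by blast
          then show ?thesis using seg_wedges[of x t "h q"] seg_wedges[of x t' "h q'"] qt qt'
            by (auto simp: path_edges_wedges)
        next
          case True
          show ?thesis
          proof (cases "x \<in> set (h q)")
            case False
            then show ?thesis using pp(3) qt qt' True by (simp add: seg_def)
          next
            case xin: True
            have "t \<noteq> t'" using pp(3) qt qt' True by auto
            obtain u where u: "q = {t,u}" "t \<noteq> u" "t \<noteq> x" "u \<noteq> x" using tp[OF qt(2,3)] by blast
            have tu: "t' = u" using u qt'(3) True \<open>t \<noteq> t'\<close> by auto
            note r = hp[OF qt(2) u(1,2)]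
            define l where "l = orient t (h q)"
            have l: "orient t' (h q) = rev l" "distinct l" "x \<in> set l"
              using orient_facts[of "h q" t u] orient_gen[of t "h q"] r u l_def tu xin by auto
            then obtain ys zs where s: "l = ys @ x # zs" "x \<notin> set ys"
              "takeWhile (\<lambda>v. v \<noteq> x) l = ys" "takeWhile (\<lambda>v. v \<noteq> x) (rev l) = rev zs"
              using seg_split[OF l(3) l(2)] by blast
            have "p = ys @ [x]" using qt(1) xin s l_def by (simp add: seg_def)
            moreover have "p' = rev zs @ [x]" using qt'(1) True xin s l by (simp add: seg_def)
            moreover have "wedges (rev zs @ [x]) = wedges (x # zs)" using wedges_rev[of "x # zs"] by simp
            ultimately show ?thesis using disj_halves[of ys x zs] s l by simp
          qed
        qed
      qed
      show "gamma_empty_connected E P x C"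
        unfolding gamma_empty_connected_def
      proof (intro exI conjI ballI allI impI)
        show "\<And>p. p \<in> SC \<Longrightarrow> is_path (induced_edges E (C \<union> {x})) p" using key SC_def by blast
        show "edge_disjoint SC" by (rule disj)
        fix a b assume a: "a \<in> C" "{a,b} \<in> P"
        note nb = neq[OF a(2)]
        note r = hp[OF a(2) refl] 
        have pin: "seg x a (h {a,b}) \<in> SC" using a SC_def by blast
        have kp: "is_path (induced_edges E (C \<union> {x})) (seg x a (h {a,b}))" using key a by blast
        show "(\<exists>p\<in>SC. path_betw (induced_edges E (C \<union> {x})) p a x \<and> b \<notin> set p) \<or>
              (\<exists>p\<in>SC. path_betw (induced_edges E (C \<union> {x})) p a b \<and> x \<notin> set p)"
        proof (cases "x \<in> set (h {a,b})")
          case False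
          then have "seg x a (h {a,b}) = h {a,b}" by (simp add: seg_def)
          moreover have "path_betw E (h {a,b}) a b" using h a by blast
          ultimately have "path_betw (induced_edges E (C \<union> {x})) (seg x a (h {a,b})) a b"
            using kp by (auto simp: path_betw_def)
          then show ?thesis using pin False \<open>seg x a (h {a,b}) = h {a,b}\<close> by metis
        next
          case True
          define l where "l = orient a (h {a,b})"
          have l: "hd l = a" "last l = b" "distinct l" "x \<in> set l"
            using orient_facts[of "h {a,b}" a b] orient_gen[of a "h {a,b}"] r nb l_def True by auto
          then obtain ys zs where s: "l = ys @ x # zs" "x \<notin> set ys"
              "takeWhile (\<lambda>v. v \<noteq> x) l = ys"
            using seg_split[of x l] by auto
          have sg: "seg x a (h {a,b}) = ys @ [x]" using True s l_def by (simp add: seg_def)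
          have "ys \<noteq> []" using s l nb by auto
          then have "hd (ys @ [x]) = a" using s l by simp
          moreover have "b \<notin> set (ys @ [x])"
          proof -
            have "b \<in> set (x # zs)" using l(2) s by (metis last_appendR last_in_set list.distinct(1))
            then show ?thesis using nb l(3) s by auto
          qed
          ultimately have "path_betw (induced_edges E (C \<union> {x})) (ys @ [x]) a x \<and> b \<notin> set (ys @ [x])"
            using kp sg by (simp add: path_betw_def)
          then show ?thesis using pin sg by metis
        qed
      qed
    qed
  }
  {
    assume R: "\<forall>C\<in>components (V - {x}) (del_verts E x). gamma_empty_connected E P x C"
    show "\<exists>S. (\<forall>p\<in>S. is_path E p) \<and> edge_disjoint S \<and>
            (\<forall>a b. {a, b} \<in> P \<longrightarrow> (\<exists>p\<in>S. path_betw E p a b))"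
    proof -
    let ?K = "components (V - {x}) (del_verts E x)"
    have "\<forall>C\<in>?K. \<exists>S. (\<forall>p\<in>S. is_path (induced_edges E (C \<union> {x})) p) \<and> edge_disjoint S \<and>
        (\<forall>a\<in>C. \<forall>b. {a, b} \<in> P \<longrightarrow>
            (\<exists>p\<in>S. path_betw (induced_edges E (C \<union> {x})) p a x \<and> b \<notin> set p) \<or>
            (\<exists>p\<in>S. path_betw (induced_edges E (C \<union> {x})) p a b \<and> x \<notin> set p))"
      using R unfolding gamma_empty_connected_def by blast
    then obtain f where f: "\<forall>C\<in>?K. (\<forall>p\<in>f C. is_path (induced_edges E (C \<union> {x})) p) \<and> edge_disjoint (f C) \<and>
        (\<forall>a\<in>C. \<forall>b. {a, b} \<in> P \<longrightarrow>
            (\<exists>p\<in>f C. path_betw (induced_edges E (C \<union> {x})) p a x \<and> b \<notin> set p) \<or>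
            (\<exists>p\<in>f C. path_betw (induced_edges E (C \<union> {x})) p a b \<and> x \<notin> set p))"
      by metis
    have fE: "\<And>C p. C \<in> ?K \<Longrightarrow> p \<in> f C \<Longrightarrow> walk E p \<and> distinct p"
      using f walk_mono ind_sub by (metis is_path_walk)
    have pbE: "\<And>C p a b. C \<in> ?K \<Longrightarrow> p \<in> f C \<Longrightarrow> path_betw (induced_edges E (C \<union> {x})) p a b \<Longrightarrow>
        path_betw E p a b"
      using fE by (auto simp: path_betw_def is_path_walk)
    define good where "good q g \<longleftrightarrow> is_path E g \<and> (\<forall>a b. q = {a,b} \<longrightarrow> path_betw E g a b) \<and>
      (\<forall>e\<in>wedges g. \<exists>C\<in>?K. \<exists>p\<in>f C. e \<in> wedges p \<and> hd p \<in> q \<union> {x} \<and> last p \<in> q \<union> {x}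
          \<and> (hd p \<in> q \<or> last p \<in> q))" for q g
    have ex: "\<forall>q\<in>P. \<exists>g. good q g"
    proof
      fix q assume q: "q \<in> P"
      then obtain a b where ab: "q = {a,b}"
        using assms(2) unfolding terminal_pairs_def by blast
      note nb = neq[OF q[unfolded ab]]
      have qba: "{b,a} \<in> P" using q ab by (simp add: insert_commute)
      obtain Ca where Ca: "Ca \<in> ?K" "a \<in> Ca" using comp_of[of a "V - {x}"] nb by blast
      obtain Cb where Cb: "Cb \<in> ?K" "b \<in> Cb" using comp_of[of b "V - {x}"] nb by blast
      have suff: "\<exists>g. good q g" if g: "is_path E g" "path_betw E g a b"
        "\<forall>e\<in>wedges g. \<exists>C\<in>?K. \<exists>p\<in>f C. e \<in> wedges p \<and> hd p \<in> q \<union> {x} \<and> last p \<in> q \<union> {x}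
          \<and> (hd p \<in> q \<or> last p \<in> q)" for g
      proof -
        have "\<forall>a' b'. q = {a',b'} \<longrightarrow> path_betw E g a' b'"
          using g(2) ab path_betw_sym by (metis doubleton_eq_iff)
        then show ?thesis using g unfolding good_def by blast
      qed
      have single: "\<exists>g. good q g" if p: "C \<in> ?K" "p \<in> f C" "path_betw (induced_edges E (C \<union> {x})) p a b" for C p
      proof -
        have pe: "path_betw E p a b" using pbE p by blast
        then have "{hd p, last p} = q" using ab path_betw_ends by metis
        then show ?thesis using suff[of p] pe p by (auto simp: path_betw_def)
      qed
      show "\<exists>g. good q g"
      proof (cases "\<exists>p\<in>f Ca. path_betw (induced_edges E (Ca \<union> {x})) p a b \<and> x \<notin> set p")
        case True then show ?thesis using single Ca by blast
      next
        case False
        then obtain p where p: "p \<in> f Ca" "path_betw (induced_edges E (Ca \<union> {x})) p a x"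
          using f Ca q ab by blast
        show ?thesis
        proof (cases "\<exists>p'\<in>f Cb. path_betw (induced_edges E (Cb \<union> {x})) p' b a \<and> a \<notin> set p' \<and> False")
          case True then show ?thesis by blast
        next
          case False
          have "(\<exists>p'\<in>f Cb. path_betw (induced_edges E (Cb \<union> {x})) p' b x) \<or>
                (\<exists>p'\<in>f Cb. path_betw (induced_edges E (Cb \<union> {x})) p' b a)"
            using f Cb qba by blast
          then show ?thesis
          proof
            assume "\<exists>p'\<in>f Cb. path_betw (induced_edges E (Cb \<union> {x})) p' b a"
            then obtain p' where "p' \<in> f Cb" "path_betw (induced_edges E (Cb \<union> {x})) p' a b"
              using path_betw_sym by metis
            then show ?thesis using single Cb by blast
          next
            assume "\<exists>p'\<in>f Cb. path_betw (induced_edges E (Cb \<union> {x})) p' b x"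
            then obtain p' where p': "p' \<in> f Cb" "path_betw (induced_edges E (Cb \<union> {x})) p' b x"
              by blast
            have pE: "path_betw E p a x" "path_betw E p' x b"
              using pbE[OF Ca(1) p(1) p(2)] pbE[OF Cb(1) p'(1) p'(2)] path_betw_sym by metis+
            have ep: "{hd p, last p} = {a,x}" "{hd p', last p'} = {x,b}" using pE path_betw_ends by metis+
            have ne: "p \<noteq> []" "p' \<noteq> []" using pE by (auto simp: path_betw_def is_path_def)
            define o1 where "o1 = orient a p"
            define o2 where "o2 = orient x p'"
            have o1: "hd o1 = a" "last o1 = x" "walk E o1" "wedges o1 = wedges p"
              using orient_facts[OF ep(1)] orient_gen[of a p E] nb ne fE[OF Ca(1) p(1)] o1_def by auto
            have o2: "hd o2 = x" "last o2 = b" "walk E o2" "wedges o2 = wedges p'"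
              using orient_facts[OF ep(2)] orient_gen[of x p' E] nb ne fE[OF Cb(1) p'(1)] o2_def by auto
            have wc: "walk E (o1 @ tl o2)" "wedges (o1 @ tl o2) = wedges p \<union> wedges p'"
              using walk_concat[OF o1(3) o2(3)] o1 o2 by auto
            have "o1 \<noteq> []" using o1(3) by auto
            then have h1: "hd (o1 @ tl o2) = a" using o1 by simp
            have "tl o2 \<noteq> []"
            proof
              assume "tl o2 = []"
              then have "o2 = [hd o2]" using o2(3) by (cases o2) auto
              then show False using o2 nb by (metis last_ConsL)
            qed
            then have h2: "last (o1 @ tl o2) = b" using o2 by (cases o2) auto
            obtain g where g: "walk E g" "distinct g" "hd g = a" "last g = b" "wedges g \<subseteq> wedges p \<union> wedges p'"
              using walk_to_path[OF wc(1)] h1 h2 wc(2) by metis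
            have gp: "is_path E g" "path_betw E g a b" using g by (auto simp: is_path_walk path_betw_def)
            have "\<forall>e\<in>wedges g. \<exists>C\<in>?K. \<exists>p\<in>f C. e \<in> wedges p \<and> hd p \<in> q \<union> {x} \<and> last p \<in> q \<union> {x}
                \<and> (hd p \<in> q \<or> last p \<in> q)"
            proof
              fix e assume "e \<in> wedges g"
              then have "e \<in> wedges p \<or> e \<in> wedges p'" using g(5) by blast
              then show "\<exists>C\<in>?K. \<exists>p\<in>f C. e \<in> wedges p \<and> hd p \<in> q \<union> {x} \<and> last p \<in> q \<union> {x}
                \<and> (hd p \<in> q \<or> last p \<in> q)"
              proof
                assume "e \<in> wedges p"
                moreover have "hd p \<in> q \<union> {x} \<and> last p \<in> q \<union> {x} \<and> (hd p \<in> q \<or> last p \<in> q)"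
                  using ep(1) ab nb by (auto simp: doubleton_eq_iff)
                ultimately show ?thesis using Ca p by blast
              next
                assume "e \<in> wedges p'"
                moreover have "hd p' \<in> q \<union> {x} \<and> last p' \<in> q \<union> {x} \<and> (hd p' \<in> q \<or> last p' \<in> q)"
                  using ep(2) ab nb by (auto simp: doubleton_eq_iff)
                ultimately show ?thesis using Cb p' by blast
              qed
            qed
            then show ?thesis using suff gp by blast
          qed
        qed
      qed
    qed
    then obtain g where g: "\<forall>q\<in>P. good q (g q)" by metis
    show "\<exists>S. (\<forall>p\<in>S. is_path E p) \<and> edge_disjoint S \<and>
            (\<forall>a b. {a, b} \<in> P \<longrightarrow> (\<exists>p\<in>S. path_betw E p a b))"
    proof (intro exI conjI)
      show "\<forall>p\<in>g ` P. is_path E p" using g good_def by auto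
      show "\<forall>a b. {a, b} \<in> P \<longrightarrow> (\<exists>p\<in>g ` P. path_betw E p a b)" using g good_def by blast
      show "edge_disjoint (g ` P)"
        unfolding edge_disjoint_def path_edges_wedges
      proof (intro ballI impI)
        fix p1 p2 assume pp: "p1 \<in> g ` P" "p2 \<in> g ` P" "p1 \<noteq> p2"
        then obtain q1 q2 where q: "q1 \<in> P" "q2 \<in> P" "p1 = g q1" "p2 = g q2" by blast
        then have "q1 \<noteq> q2" using pp(3) by blast
        then have qd: "q1 \<inter> q2 = {}" using assms(5) q by blast
        show "wedges p1 \<inter> wedges p2 = {}"
        proof (rule ccontr)
          assume "wedges p1 \<inter> wedges p2 \<noteq> {}"
          then obtain e where e: "e \<in> wedges p1" "e \<in> wedges p2" by blast
          obtain C1 r1 where c1: "C1 \<in> ?K" "r1 \<in> f C1" "e \<in> wedges r1" "hd r1 \<in> q1 \<union> {x}"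
              "last r1 \<in> q1 \<union> {x}" "hd r1 \<in> q1 \<or> last r1 \<in> q1"
          proof -
            have "good q1 (g q1)" using g q by blast
            then have "\<forall>e\<in>wedges (g q1). \<exists>C\<in>?K. \<exists>p\<in>f C. e \<in> wedges p \<and> hd p \<in> q1 \<union> {x} \<and> last p \<in> q1 \<union> {x}
          \<and> (hd p \<in> q1 \<or> last p \<in> q1)" unfolding good_def by blast
            moreover have "e \<in> wedges (g q1)" using e q by simp
            ultimately show ?thesis using that by blast
          qed
          obtain C2 r2 where c2: "C2 \<in> ?K" "r2 \<in> f C2" "e \<in> wedges r2" "hd r2 \<in> q2 \<union> {x}"
              "last r2 \<in> q2 \<union> {x}" "hd r2 \<in> q2 \<or> last r2 \<in> q2"
          proof -
            have "good q2 (g q2)" using g q by blast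
            then have "\<forall>e\<in>wedges (g q2). \<exists>C\<in>?K. \<exists>p\<in>f C. e \<in> wedges p \<and> hd p \<in> q2 \<union> {x} \<and> last p \<in> q2 \<union> {x}
          \<and> (hd p \<in> q2 \<or> last p \<in> q2)" unfolding good_def by blast
            moreover have "e \<in> wedges (g q2)" using e q by simp
            ultimately show ?thesis using that by blast
          qed
          have xq: "x \<notin> q1" "x \<notin> q2" using assms(9) q by auto
          show False
          proof (cases "C1 = C2")
            case True
            show False
            proof (cases "r1 = r2")
              case True
              then show False using c1 c2 qd xq by blast
            next
              case False
              then have "path_edges r1 \<inter> path_edges r2 = {}"
                using f c1 c2 \<open>C1 = C2\<close> unfolding edge_disjoint_def by blast
              then show False using c1 c2 by (auto simp: path_edges_wedges)
            qed
          next
            case False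
            have w1: "e \<in> induced_edges E (C1 \<union> {x})"
              using walk_wedges f c1 by (metis is_path_walk subsetD)
            have w2: "e \<in> induced_edges E (C2 \<union> {x})"
              using walk_wedges f c2 by (metis is_path_walk subsetD)
            have "C1 \<inter> C2 = {}" using comp_disj[OF c1(1) c2(1) False] .
            then have "e \<subseteq> {x}" using w1 w2 by (auto simp: induced_edges_def)
            moreover obtain u v where "e = {u,v}" "u \<noteq> v"
              using w1 assms(1) by (auto simp: induced_edges_def graph_def)
            ultimately show False by auto
          qed
        qed
      qed
    qed
    qed
  }
qed

end
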